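(* Let $G$ act properly on the Borel space $S$ such that the stabilizer $G_{s,s}=\{g\in G:gs=s\}$ is locally closed in $G$ (the intersection of an open and a closed set) for every $s\in S$. Then $G_{s,s}$ is compact for every $s\in S$.
   Context: $G$ is a locally compact second countable Hausdorff group with left Haar measure $\lambda$. $S$ is a Borel space, $G$ acts measurably on $S$, and the action is proper: with $\mu_s$ the image of $\lambda$ under $g\mapsto gs$, there is a measurable partition $B_1,B_2,\dots$ of $S$ such that $\mu_s(B_n)<\infty$ for all $s\in S$, $n\in\mathbb N$. *)

theory Defs
  imports "HOL-Analysis.Analysis"
begin

text \<open>The group G is a type of class topological_group_add (a possibly
non-commutative group, written additively, with jointly continuous
operation and continuous inversion).\<close>

text \<open>Left Haar measure on a locally compact second countable Hausdorff group:
a Borel measure that is left invariant, finite on compact sets and positive on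
nonempty open sets (regularity is automatic in the lcsc setting).\<close>
definition left_haar_measure :: "('g::topological_group_add) measure \<Rightarrow> bool" where
  "left_haar_measure L \<longleftrightarrow>
     sets L = sets borel \<and>
     (\<forall>g A. A \<in> sets borel \<longrightarrow> emeasure L ((\<lambda>x. g + x) ` A) = emeasure L A) \<and>
     (\<forall>K. compact K \<longrightarrow> emeasure L K < \<infinity>) \<and>
     (\<forall>U. open U \<and> U \<noteq> {} \<longrightarrow> emeasure L U > 0)"

text \<open>Borel space (standard Borel space): Borel isomorphic to a Borel subset of [0,1].\<close>
definition borel_space :: "'s measure \<Rightarrow> bool" where
  "borel_space M \<longleftrightarrow>
     (\<exists>f :: 's \<Rightarrow> real. f \<in> M \<rightarrow>\<^sub>M borel \<and> inj_on f (space M) \<and>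
        f ` space M \<subseteq> {0..1} \<and> f ` space M \<in> sets borel \<and>
        (\<forall>A \<in> sets M. f ` A \<in> sets borel))"

definition measurable_action :: "('g::topological_group_add \<Rightarrow> 's \<Rightarrow> 's) \<Rightarrow> 's measure \<Rightarrow> bool" where
  "measurable_action act M \<longleftrightarrow>
     (\<lambda>(g, s). act g s) \<in> (borel \<Otimes>\<^sub>M M) \<rightarrow>\<^sub>M M \<and>
     (\<forall>s \<in> space M. act 0 s = s) \<and>
     (\<forall>g h. \<forall>s \<in> space M. act (g + h) s = act g (act h s))"

definition proper_action ::
  "('g::topological_group_add) measure \<Rightarrow> ('g \<Rightarrow> 's \<Rightarrow> 's) \<Rightarrow> 's measure \<Rightarrow> bool" where
  "proper_action L act M \<longleftrightarrow>
     (\<exists>B :: nat \<Rightarrow> 's set. (\<forall>n. B n \<in> sets M) \<and> disjoint_family B \<and>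
        (\<Union>n. B n) = space M \<and>
        (\<forall>s \<in> space M. \<forall>n. emeasure (distr L M (\<lambda>g. act g s)) (B n) < \<infinity>))"

definition stabilizer :: "('g \<Rightarrow> 's \<Rightarrow> 's) \<Rightarrow> 's \<Rightarrow> 'g set" where
  "stabilizer act s = {g. act g s = s}"

definition locally_closed :: "('a::topological_space) set \<Rightarrow> bool" where
  "locally_closed A \<longleftrightarrow> (\<exists>U C. open U \<and> closed C \<and> A = U \<inter> C)"

end

theory Submission
  imports Defs
begin

lemma bm_uminus_grp[measurable (raw)]:
  fixes g :: "'a \<Rightarrow> 'b::{second_countable_topology, topological_group_add}"
  assumes g: "g \<in> borel_measurable M"
  shows "(\<lambda>x. - g x) \<in> borel_measurable M"
  by (rule borel_measurable_continuous_on[OF _ g]) (intro continuous_intros)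

lemma inv_integral:
  fixes \<nu> :: "'g::{topological_group_add, second_countable_topology} measure"
  assumes s: "sets \<nu> = sets borel"
    and inv: "\<forall>g A. A \<in> sets borel \<longrightarrow> emeasure \<nu> ((\<lambda>x. g + x) ` A) = emeasure \<nu> A"
    and f: "f \<in> borel_measurable borel"
  shows "(\<integral>\<^sup>+y. f (x + y) \<partial>\<nu>) = (\<integral>\<^sup>+y. f y \<partial>\<nu>)"
proof -
  have sp: "space \<nu> = UNIV" using sets_eq_imp_space_eq[OF s] by simp
  have m: "(\<lambda>y. x + y) \<in> measurable \<nu> borel"
    by (subst measurable_cong_sets[OF s refl]) (rule borel_measurable_continuous_onI, intro continuous_intros)
  have d: "distr \<nu> borel (\<lambda>y. x + y) = \<nu>"
  proof (rule measure_eqI)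
    show "sets (distr \<nu> borel (\<lambda>y. x + y)) = sets \<nu>" using s by simp
    fix A assume "A \<in> sets (distr \<nu> borel (\<lambda>y. x + y))"
    hence A: "A \<in> sets borel" by simp
    have e: "(\<lambda>y. x + y) -` A \<inter> space \<nu> = (\<lambda>a. - x + a) ` A"
      by (auto simp: sp image_iff) (metis add.assoc add.left_inverse add_0)+
    have "(\<lambda>y. x + y) -` A \<inter> space \<nu> \<in> sets borel"
      using measurable_sets[OF m, of A] A s by simp
    hence "(\<lambda>a. - x + a) ` A \<in> sets borel" using e by simp
    show "emeasure (distr \<nu> borel (\<lambda>y. x + y)) A = emeasure \<nu> A"
      using A by (simp add: emeasure_distr[OF m] e inv)
  qed
  have "(\<integral>\<^sup>+y. f y \<partial>\<nu>) = (\<integral>\<^sup>+y. f y \<partial>distr \<nu> borel (\<lambda>y. x + y))" using d by simp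
  also have "\<dots> = (\<integral>\<^sup>+y. f (x + y) \<partial>\<nu>)"
  proof (rule nn_integral_distr[OF m])
    show "f \<in> borel_measurable (distr \<nu> borel (\<lambda>y. x + y))"
      by (subst measurable_cong_sets[OF sets_distr refl]) (rule f)
  qed
  finally show ?thesis by simp
qed

lemma prod_meas:
  fixes \<mu> \<nu> :: "'g::second_countable_topology measure"
  assumes "sets \<mu> = sets borel" "sets \<nu> = sets borel"
    and "\<phi> \<in> borel_measurable borel"
  shows "\<phi> \<in> borel_measurable (\<mu> \<Otimes>\<^sub>M \<nu>)"
proof -
  have "sets (\<mu> \<Otimes>\<^sub>M \<nu>) = sets (borel \<Otimes>\<^sub>M borel)"
    using assms by (intro sets_pair_measure_cong) auto
  also have "\<dots> = sets (borel :: ('g \<times> 'g) measure)" by (metis borel_prod)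
  finally show ?thesis using assms(3) by (subst measurable_cong_sets[OF _ refl]) auto
qed

lemma comp_cont_meas:
  fixes \<phi> :: "'a::topological_space \<Rightarrow> ennreal"
  assumes "\<phi> \<in> borel_measurable borel" "continuous_on UNIV T"
  shows "(\<lambda>p. \<phi> (T p)) \<in> borel_measurable borel"
  using measurable_comp[OF borel_measurable_continuous_onI[OF assms(2)] assms(1)]
  by (simp add: comp_def)

lemma shear:
  fixes \<mu> \<nu> :: "'g::{topological_group_add, second_countable_topology} measure"
  assumes s\<mu>: "sets \<mu> = sets borel" and s\<nu>: "sets \<nu> = sets borel"
    and f\<mu>: "sigma_finite_measure \<mu>" and f\<nu>: "sigma_finite_measure \<nu>"
    and i\<mu>: "\<forall>g A. A \<in> sets borel \<longrightarrow> emeasure \<mu> ((\<lambda>x. g + x) ` A) = emeasure \<mu> A"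
    and i\<nu>: "\<forall>g A. A \<in> sets borel \<longrightarrow> emeasure \<nu> ((\<lambda>x. g + x) ` A) = emeasure \<nu> A"
    and \<phi>: "\<phi> \<in> borel_measurable (borel :: ('g \<times> 'g) measure)"
  shows "(\<integral>\<^sup>+x. \<integral>\<^sup>+y. \<phi> (y + x, - x) \<partial>\<nu> \<partial>\<mu>) = (\<integral>\<^sup>+x. \<integral>\<^sup>+y. \<phi> (x, y) \<partial>\<nu> \<partial>\<mu>)"
proof -
  interpret pair_sigma_finite \<mu> \<nu> using f\<mu> f\<nu> by (simp add: pair_sigma_finite_def)
  have sec: "(\<lambda>x. ch (x, y)) \<in> borel_measurable borel" "(\<lambda>y. ch (x, y)) \<in> borel_measurable borel"
    if "ch \<in> borel_measurable borel" for ch :: "'g \<times> 'g \<Rightarrow> ennreal" and x y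
    by (rule comp_cont_meas[OF that], intro continuous_intros)+
  have R: "(\<integral>\<^sup>+x. \<integral>\<^sup>+y. ch (y + x, y) \<partial>\<nu> \<partial>\<mu>) = (\<integral>\<^sup>+x. \<integral>\<^sup>+y. ch (x, y) \<partial>\<nu> \<partial>\<mu>)"
    if c: "ch \<in> borel_measurable borel" for ch :: "'g \<times> 'g \<Rightarrow> ennreal"
  proof -
    have m1: "case_prod (\<lambda>x y. ch (y + x, y)) \<in> borel_measurable (\<mu> \<Otimes>\<^sub>M \<nu>)"
      unfolding case_prod_beta'
      by (rule prod_meas[OF s\<mu> s\<nu>], rule comp_cont_meas[OF c], intro continuous_intros)
    have m2: "case_prod (\<lambda>x y. ch (x, y)) \<in> borel_measurable (\<mu> \<Otimes>\<^sub>M \<nu>)"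
      using prod_meas[OF s\<mu> s\<nu> c] by simp
    have "(\<integral>\<^sup>+x. \<integral>\<^sup>+y. ch (y + x, y) \<partial>\<nu> \<partial>\<mu>) = (\<integral>\<^sup>+y. \<integral>\<^sup>+x. ch (y + x, y) \<partial>\<mu> \<partial>\<nu>)"
      using Fubini'[OF m1] by simp
    also have "\<dots> = (\<integral>\<^sup>+y. \<integral>\<^sup>+x. ch (x, y) \<partial>\<mu> \<partial>\<nu>)"
      by (intro nn_integral_cong inv_integral[OF s\<mu> i\<mu> sec(1)[OF c]])
    also have "\<dots> = (\<integral>\<^sup>+x. \<integral>\<^sup>+y. ch (x, y) \<partial>\<nu> \<partial>\<mu>)"
      using Fubini'[OF m2] by simp
    finally show ?thesis .
  qed
  have S: "(\<integral>\<^sup>+x. \<integral>\<^sup>+y. ch (x, x + y) \<partial>\<nu> \<partial>\<mu>) = (\<integral>\<^sup>+x. \<integral>\<^sup>+y. ch (x, y) \<partial>\<nu> \<partial>\<mu>)"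
    if c: "ch \<in> borel_measurable borel" for ch :: "'g \<times> 'g \<Rightarrow> ennreal"
    using inv_integral[OF s\<nu> i\<nu> sec(2)[OF c]] by simp
  define \<psi> where "\<psi> = (\<lambda>p. \<phi> (fst p, - fst p + snd p))"
  have \<psi>m: "\<psi> \<in> borel_measurable borel"
    unfolding \<psi>_def by (rule comp_cont_meas[OF \<phi>], intro continuous_intros)
  have e1: "\<psi> (y + x, y) = \<phi> (y + x, - x)" for x y
    by (simp add: \<psi>_def minus_add add.assoc)
  have e2: "\<psi> (x, x + y) = \<phi> (x, y)" for x y
    by (simp add: \<psi>_def add.assoc[symmetric])
  have "(\<integral>\<^sup>+x. \<integral>\<^sup>+y. \<phi> (y + x, - x) \<partial>\<nu> \<partial>\<mu>) = (\<integral>\<^sup>+x. \<integral>\<^sup>+y. \<psi> (y + x, y) \<partial>\<nu> \<partial>\<mu>)"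
    by (simp add: e1)
  also have "\<dots> = (\<integral>\<^sup>+x. \<integral>\<^sup>+y. \<psi> (x, y) \<partial>\<nu> \<partial>\<mu>)" by (rule R[OF \<psi>m])
  also have "\<dots> = (\<integral>\<^sup>+x. \<integral>\<^sup>+y. \<psi> (x, x + y) \<partial>\<nu> \<partial>\<mu>)" by (rule S[OF \<psi>m, symmetric])
  also have "\<dots> = (\<integral>\<^sup>+x. \<integral>\<^sup>+y. \<phi> (x, y) \<partial>\<nu> \<partial>\<mu>)" by (simp add: e2)
  finally show ?thesis .
qed

lemma translate_sets:
  fixes E :: "'g::{topological_group_add, second_countable_topology} set"
  assumes "E \<in> sets borel"
  shows "{y. y + x \<in> E} \<in> sets borel"
proof -
  have m: "(\<lambda>y. y + x) \<in> borel_measurable (borel :: 'g measure)"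
    by (rule borel_measurable_continuous_onI, intro continuous_intros)
  show ?thesis using measurable_sets[OF m assms] by (simp add: vimage_def)
qed

lemma unique_formula:
  fixes \<mu> \<nu> :: "'g::{topological_group_add, second_countable_topology} measure"
  assumes s\<mu>: "sets \<mu> = sets borel" and s\<nu>: "sets \<nu> = sets borel"
    and f\<mu>: "sigma_finite_measure \<mu>" and f\<nu>: "sigma_finite_measure \<nu>"
    and i\<mu>: "\<forall>g A. A \<in> sets borel \<longrightarrow> emeasure \<mu> ((\<lambda>x. g + x) ` A) = emeasure \<mu> A"
    and i\<nu>: "\<forall>g A. A \<in> sets borel \<longrightarrow> emeasure \<nu> ((\<lambda>x. g + x) ` A) = emeasure \<nu> A"
    and E: "E \<in> sets borel"
    and rpos: "\<And>x. 0 < emeasure \<nu> {y. y + x \<in> E}" and rfin: "\<And>x. emeasure \<nu> {y. y + x \<in> E} < \<infinity>"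
    and D: "D \<in> sets borel"
  shows "emeasure \<mu> D = emeasure \<mu> E * (\<integral>\<^sup>+y. indicator D (-y) / emeasure \<nu> {z. z + - y \<in> E} \<partial>\<nu>)"
proof -
  define r where "r x = emeasure \<nu> {y. y + x \<in> E}" for x
  have ind: "(\<lambda>p. indicator E (snd p + fst p) :: ennreal) \<in> borel_measurable (borel :: ('g\<times>'g) measure)"
    by (rule comp_cont_meas[OF borel_measurable_indicator[OF E]], intro continuous_intros)
  have ind1: "(\<lambda>y. indicator E (y + x) :: ennreal) \<in> borel_measurable \<nu>" for x
    by (subst measurable_cong_sets[OF s\<nu> refl])
      (rule comp_cont_meas[OF borel_measurable_indicator[OF E]], intro continuous_intros)
  have r_int: "r x = (\<integral>\<^sup>+y. indicator E (y + x) \<partial>\<nu>)" for x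
  proof -
    have "(\<integral>\<^sup>+y. indicator E (y + x) \<partial>\<nu>) = (\<integral>\<^sup>+y. indicator {y. y + x \<in> E} y \<partial>\<nu>)"
      by (intro nn_integral_cong) (auto simp: indicator_def)
    also have "\<dots> = r x" unfolding r_def
      by (rule nn_integral_indicator) (simp add: s\<nu> translate_sets[OF E])
    finally show ?thesis by simp
  qed
  have rm: "r \<in> borel_measurable borel"
  proof -
    have "case_prod (\<lambda>x y. indicator E (y + x) :: ennreal) \<in> borel_measurable (borel \<Otimes>\<^sub>M \<nu>)"
      unfolding case_prod_beta' by (rule prod_meas[OF refl s\<nu> ind])
    from sigma_finite_measure.borel_measurable_nn_integral[OF f\<nu> this]
    show ?thesis by (simp add: r_int[abs_def])
  qed
  define g where "g x = indicator D x / r x" for x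
  have gm: "g \<in> borel_measurable borel" unfolding g_def
    using rm D by measurable
  define \<phi> where "\<phi> p = g (- snd p) * indicator E (fst p)" for p :: "'g \<times> 'g"
  have \<phi>m: "\<phi> \<in> borel_measurable borel" unfolding \<phi>_def
  proof (rule borel_measurable_times_ennreal)
    show "(\<lambda>x. g (- snd x)) \<in> borel_measurable borel"
      by (rule comp_cont_meas[OF gm], intro continuous_intros)
    show "(\<lambda>x. indicator E (fst x) :: ennreal) \<in> borel_measurable borel"
      by (rule comp_cont_meas[OF borel_measurable_indicator[OF E]], intro continuous_intros)
  qed
  have sh: "(\<integral>\<^sup>+x. \<integral>\<^sup>+y. \<phi> (y + x, - x) \<partial>\<nu> \<partial>\<mu>) = (\<integral>\<^sup>+x. \<integral>\<^sup>+y. \<phi> (x, y) \<partial>\<nu> \<partial>\<mu>)"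
    by (rule shear[OF s\<mu> s\<nu> f\<mu> f\<nu> i\<mu> i\<nu> \<phi>m])
  have "(\<integral>\<^sup>+x. \<integral>\<^sup>+y. \<phi> (y + x, - x) \<partial>\<nu> \<partial>\<mu>) = (\<integral>\<^sup>+x. g x * r x \<partial>\<mu>)"
  proof (intro nn_integral_cong)
    fix x
    have "(\<integral>\<^sup>+y. \<phi> (y + x, - x) \<partial>\<nu>) = (\<integral>\<^sup>+y. g x * indicator E (y + x) \<partial>\<nu>)"
      by (simp add: \<phi>_def)
    also have "\<dots> = g x * r x" by (simp add: nn_integral_cmult[OF ind1] r_int)
    finally show "(\<integral>\<^sup>+y. \<phi> (y + x, - x) \<partial>\<nu>) = g x * r x" .
  qed
  also have "\<dots> = (\<integral>\<^sup>+x. indicator D x \<partial>\<mu>)"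
  proof (intro nn_integral_cong)
    fix x
    have "r x \<noteq> 0" "r x < top" using rpos[of x] rfin[of x] by (auto simp: r_def)
    thus "g x * r x = indicator D x" by (simp add: g_def ennreal_divide_times)
  qed
  also have "\<dots> = emeasure \<mu> D" using D s\<mu> by simp
  finally have L: "(\<integral>\<^sup>+x. \<integral>\<^sup>+y. \<phi> (y + x, - x) \<partial>\<nu> \<partial>\<mu>) = emeasure \<mu> D" .
  have gm\<nu>: "(\<lambda>y. g (- y)) \<in> borel_measurable \<nu>"
    by (subst measurable_cong_sets[OF s\<nu> refl]) (rule comp_cont_meas[OF gm], intro continuous_intros)
  have "(\<integral>\<^sup>+x. \<integral>\<^sup>+y. \<phi> (x, y) \<partial>\<nu> \<partial>\<mu>) = (\<integral>\<^sup>+x. (\<integral>\<^sup>+y. g (- y) \<partial>\<nu>) * indicator E x \<partial>\<mu>)"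
    by (simp add: \<phi>_def nn_integral_multc[OF gm\<nu>])
  also have "\<dots> = (\<integral>\<^sup>+y. g (- y) \<partial>\<nu>) * emeasure \<mu> E"
    using E s\<mu> by (simp add: nn_integral_cmult)
  finally have R: "(\<integral>\<^sup>+x. \<integral>\<^sup>+y. \<phi> (x, y) \<partial>\<nu> \<partial>\<mu>) = (\<integral>\<^sup>+y. g (- y) \<partial>\<nu>) * emeasure \<mu> E" .
  show ?thesis using sh L R by (simp add: g_def r_def mult.commute)
qed

lemma ennreal_cancel_right:
  fixes a b c :: ennreal
  assumes "a * c = b * c" "c \<noteq> 0" "c \<noteq> top"
  shows "a = b"
proof -
  have "a = a * c / c" using ennreal_mult_divide_eq assms(2,3) by simp
  also have "\<dots> = b * c / c" using assms(1) by simp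
  also have "\<dots> = b" using ennreal_mult_divide_eq assms(2,3) by simp
  finally show ?thesis .
qed

lemma img_translate:
  fixes h :: "'g::group_add"
  shows "(\<lambda>d. d + h) ` S = {x. x + - h \<in> S}"
proof (intro set_eqI iffI)
  fix x assume "x \<in> (\<lambda>d. d + h) ` S" then obtain d where "d \<in> S" "x = d + h" by auto
  thus "x \<in> {x. x + - h \<in> S}" by simp
next
  fix x assume "x \<in> {x. x + - h \<in> S}"
  hence "x + - h \<in> S" by simp
  moreover have "x = (x + - h) + h" by (simp add: add.assoc)
  ultimately show "x \<in> (\<lambda>d. d + h) ` S" by (rule rev_image_eqI)
qed

lemma img_translate2:
  fixes h :: "'g::group_add"
  shows "(\<lambda>d. d + h) ` {x. x + h \<in> a} = a"
  unfolding img_translate by (simp add: add.assoc)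

lemma img_translate_left:
  fixes g :: "'g::group_add"
  shows "(\<lambda>x. g + x) ` S = (\<lambda>x. - g + x) -` S"
proof (intro set_eqI iffI)
  fix x assume "x \<in> (\<lambda>x. g + x) ` S" then obtain d where "d \<in> S" "x = g + d" by auto
  thus "x \<in> (\<lambda>x. - g + x) -` S" by (simp add: add.assoc[symmetric])
next
  fix x assume "x \<in> (\<lambda>x. - g + x) -` S"
  hence "- g + x \<in> S" by simp
  moreover have "x = g + (- g + x)" by (simp add: add.assoc[symmetric])
  ultimately show "x \<in> (\<lambda>x. g + x) ` S" by (rule rev_image_eqI)
qed

lemma right_translate:
  fixes L :: "'g::{topological_group_add, second_countable_topology} measure"
  assumes sL: "sets L = sets borel" and fL: "sigma_finite_measure L"
    and iL: "\<forall>g A. A \<in> sets borel \<longrightarrow> emeasure L ((\<lambda>x. g + x) ` A) = emeasure L A"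
    and E: "E \<in> sets borel"
    and rpos: "\<And>x. 0 < emeasure L {y. y + x \<in> E}" and rfin: "\<And>x. emeasure L {y. y + x \<in> E} < \<infinity>"
    and A: "A \<in> sets borel" and Apos: "0 < emeasure L A" and Afin: "emeasure L A < \<infinity>"
    and Ah: "emeasure L ((\<lambda>a. a + h) ` A) = emeasure L A"
    and D: "D \<in> sets borel"
  shows "emeasure L ((\<lambda>d. d + h) ` D) = emeasure L D"
proof -
  have spL: "space L = UNIV" using sets_eq_imp_space_eq[OF sL] by simp
  define N where "N = distr L borel (\<lambda>x. x + - h)"
  have m: "(\<lambda>x. x + - h) \<in> measurable L borel"
    by (subst measurable_cong_sets[OF sL refl]) (rule borel_measurable_continuous_onI, intro continuous_intros)
  have sN: "sets N = sets borel" by (simp add: N_def)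
  have tb: "(\<lambda>d. d + h) ` S \<in> sets borel" if "S \<in> sets borel" for S
    unfolding img_translate by (rule translate_sets[OF that])
  have eN: "emeasure N S = emeasure L ((\<lambda>d. d + h) ` S)" if "S \<in> sets borel" for S
  proof -
    have v: "(\<lambda>x. x + - h) -` S \<inter> space L = (\<lambda>d. d + h) ` S"
      by (simp add: spL img_translate vimage_def)
    have "emeasure N S = emeasure L ((\<lambda>x. x + - h) -` S \<inter> space L)"
      unfolding N_def by (rule emeasure_distr[OF m]) (use that in simp)
    thus ?thesis by (simp only: v)
  qed
  have fN: "sigma_finite_measure N"
  proof -
    obtain C where C: "countable C" "C \<subseteq> sets L" "\<Union>C = space L" "\<forall>a\<in>C. emeasure L a \<noteq> \<infinity>"
      using fL unfolding sigma_finite_measure_def by blast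
    let ?C = "(\<lambda>a. {x. x + h \<in> a}) ` C"
    have ab: "a \<in> sets borel" if "a \<in> C" for a using C(2) that sL by auto
    have img: "(\<lambda>d. d + h) ` {x. x + h \<in> a} = a" for a by (rule img_translate2)
    have "countable ?C" using C(1) by simp
    moreover have "?C \<subseteq> sets N" using ab translate_sets sN by auto
    moreover have "\<Union>?C = space N" using C(3) spL sN sets_eq_imp_space_eq[OF sN] by auto
    moreover have "\<forall>a\<in>?C. emeasure N a \<noteq> \<infinity>"
      using C(4) ab by (auto simp: eN translate_sets img)
    ultimately show ?thesis unfolding sigma_finite_measure_def by blast
  qed
  have iN: "\<forall>g S. S \<in> sets borel \<longrightarrow> emeasure N ((\<lambda>x. g + x) ` S) = emeasure N S"
  proof (intro allI impI)
    fix g S assume S: "(S::'g set) \<in> sets borel"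
    have gS: "(\<lambda>x. g + x) ` S \<in> sets borel"
    proof -
      have "(\<lambda>x. g + x) ` S = (\<lambda>x. - g + x) -` S"
        by (rule img_translate_left)
      moreover have "(\<lambda>x. - g + x) -` S \<inter> space borel \<in> sets borel"
        by (rule measurable_sets[OF _ S], rule borel_measurable_continuous_onI, intro continuous_intros)
      ultimately show ?thesis by simp
    qed
    have "(\<lambda>d. d + h) ` (\<lambda>x. g + x) ` S = (\<lambda>x. g + x) ` ((\<lambda>d. d + h) ` S)"
      by (auto simp: image_image add.assoc)
    thus "emeasure N ((\<lambda>x. g + x) ` S) = emeasure N S"
      using iL tb[OF S] by (simp add: eN[OF gS] eN[OF S])
  qed
  have Nr: "emeasure N {y. y + x \<in> E} = emeasure L {y. y + (- h + x) \<in> E}" for x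
  proof -
    have "(\<lambda>d. d + h) ` {y. y + x \<in> E} = {y. y + (- h + x) \<in> E}"
      unfolding img_translate by (simp only: mem_Collect_eq add.assoc)
    thus ?thesis by (simp add: eN translate_sets[OF E])
  qed
  have rposN: "0 < emeasure N {y. y + x \<in> E}" and rfinN: "emeasure N {y. y + x \<in> E} < \<infinity>" for x
    using rpos rfin by (simp_all add: Nr)
  define J where "J S = (\<integral>\<^sup>+y. indicator S (-y) / emeasure N {z. z + - y \<in> E} \<partial>N)" for S
  have U1: "emeasure L S = emeasure L E * J S" if "S \<in> sets borel" for S
    unfolding J_def by (rule unique_formula[OF sL sN fL fN iL iN E rposN rfinN that])
  have U2: "emeasure N S = emeasure N E * J S" if "S \<in> sets borel" for S
    unfolding J_def by (rule unique_formula[OF sN sN fN fN iN iN E rposN rfinN that])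
  have LE0: "emeasure L E \<noteq> 0" "emeasure L E \<noteq> top"
    using rpos[of 0] rfin[of 0] by auto
  have NA: "emeasure N A = emeasure L A" using eN[OF A] Ah by simp
  have JA0: "J A \<noteq> 0" using U1[OF A] Apos by auto
  have JAt: "J A \<noteq> top" using U1[OF A] Afin LE0 by (auto simp: ennreal_mult_eq_top_iff)
  have NE: "emeasure N E = emeasure L E"
    by (rule ennreal_cancel_right[OF _ JA0 JAt]) (use U1[OF A] U2[OF A] NA in simp)
  have "emeasure N D = emeasure L D" using U1[OF D] U2[OF D] NE by simp
  thus ?thesis using eN[OF D] by simp
qed

lemma lc_nbhd:
  fixes x :: "'a::topological_space"
  assumes "locally_compact_space (euclidean :: 'a topology)"
  obtains U K where "open U" "compact K" "x \<in> U" "U \<subseteq> K"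
  using assms unfolding locally_compact_space_def by (simp add: open_openin[symmetric]) blast

lemma sigma_compact:
  fixes dummy :: "'a::{second_countable_topology}"
  assumes lc: "locally_compact_space (euclidean :: 'a topology)"
  obtains K :: "nat \<Rightarrow> 'a set" where "\<And>n. compact (K n)" "(\<Union>n. K n) = UNIV"
proof -
  obtain B :: "'a set set" where B: "countable B" "topological_basis B"
    using ex_countable_basis by blast
  define B' where "B' = {b \<in> B. \<exists>K. compact K \<and> b \<subseteq> K}"
  define f where "f b = (SOME K. compact K \<and> b \<subseteq> K)" for b :: "'a set"
  have fb: "compact (f b) \<and> b \<subseteq> f b" if "b \<in> B'" for b
    unfolding f_def by (rule someI_ex) (use that in \<open>simp add: B'_def\<close>)
  have cov: "\<exists>b\<in>B'. x \<in> b" for x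
  proof -
    obtain U K where UK: "open U" "compact K" "x \<in> U" "U \<subseteq> K"
      using lc unfolding locally_compact_space_def by (simp add: open_openin[symmetric]) blast
    obtain b where "b \<in> B" "x \<in> b" "b \<subseteq> U" using topological_basisE[OF B(2) UK(1,3)] by blast
    thus ?thesis using UK unfolding B'_def by blast
  qed
  have ne: "f ` B' \<noteq> {}" using cov by blast
  have cf: "countable (f ` B')" using B(1) unfolding B'_def by simp
  let ?K = "from_nat_into (f ` B')"
  have c1: "compact (?K n)" for n using from_nat_into[OF ne, of n] fb by auto
  have c2: "(\<Union>n. ?K n) = UNIV"
  proof -
    have r: "range ?K = f ` B'" by (rule range_from_nat_into[OF ne cf])
    have u: "\<Union>(f ` B') = UNIV"
    proof (rule sym, rule UNIV_eq_I)
      fix x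
      obtain b where b: "b \<in> B'" "x \<in> b" using cov by blast
      have "x \<in> f b" using fb[OF b(1)] b(2) by blast
      thus "x \<in> \<Union>(f ` B')" using b(1) by blast
    qed
    show ?thesis by (simp only: r u)
  qed
  show ?thesis by (rule that[OF c1 c2])
qed
lemma haar_D:
  assumes "left_haar_measure L"
  shows haar_sets: "sets L = sets borel"
    and haar_inv: "\<forall>g A. A \<in> sets borel \<longrightarrow> emeasure L ((\<lambda>x. g + x) ` A) = emeasure L A"
    and haar_fin: "\<And>K. compact K \<Longrightarrow> emeasure L K < \<infinity>"
    and haar_pos: "\<And>U. open U \<Longrightarrow> U \<noteq> {} \<Longrightarrow> 0 < emeasure L U"
proof -
  note h = assms[unfolded left_haar_measure_def]
  show "sets L = sets borel" using h by (rule conjunct1)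
  show "\<forall>g A. A \<in> sets borel \<longrightarrow> emeasure L ((\<lambda>x. g + x) ` A) = emeasure L A"
    using h by (rule conjunct1[OF conjunct2])
  show "emeasure L K < \<infinity>" if "compact K" for K
  proof -
    have "\<forall>K. compact K \<longrightarrow> emeasure L K < \<infinity>" using h[THEN conjunct2, THEN conjunct2, THEN conjunct1] .
    thus ?thesis using that by simp
  qed
  show "0 < emeasure L U" if "open U" "U \<noteq> {}" for U
  proof -
    have "\<forall>U. open U \<and> U \<noteq> {} \<longrightarrow> 0 < emeasure L U" using h[THEN conjunct2, THEN conjunct2, THEN conjunct2] .
    thus ?thesis using that by simp
  qed
qed
lemma translate_open_fin:
  fixes L :: "'g::{topological_group_add, t2_space} measure"
  assumes H: "left_haar_measure L" and U: "open U" "compact K" "u \<in> U" "U \<subseteq> K"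
  shows "0 < emeasure L {y. y + x \<in> U}" "emeasure L {y. y + x \<in> U} < \<infinity>"
proof -
  have o: "open {y. y + x \<in> U}"
  proof -
    have "continuous_on UNIV (\<lambda>y. y + x)" by (intro continuous_intros)
    from open_vimage[OF U(1) this] show ?thesis by (simp add: vimage_def)
  qed
  have ne: "u + - x \<in> {y. y + x \<in> U}" using U(3) by (simp add: add.assoc)
  hence "{y. y + x \<in> U} \<noteq> {}" by blast
  thus "0 < emeasure L {y. y + x \<in> U}" by (rule haar_pos[OF H o])
  have sub: "{y. y + x \<in> U} \<subseteq> (\<lambda>k. k + - x) ` K"
  proof
    fix y assume "y \<in> {y. y + x \<in> U}"
    hence "y + x \<in> K" using U(4) by auto
    moreover have "y = (y + x) + - x" by (simp add: add.assoc)
    ultimately show "y \<in> (\<lambda>k. k + - x) ` K" by (rule rev_image_eqI)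
  qed
  have ck: "compact ((\<lambda>k. k + - x) ` K)"
    by (rule compact_continuous_image[OF _ U(2)], intro continuous_intros)
  have "emeasure L {y. y + x \<in> U} \<le> emeasure L ((\<lambda>k. k + - x) ` K)"
    by (rule emeasure_mono[OF sub]) (simp only: haar_sets[OF H], rule borel_compact[OF ck])
  also have "\<dots> < \<infinity>" by (rule haar_fin[OF H ck])
  finally show "emeasure L {y. y + x \<in> U} < \<infinity>" .
qed

lemma haar_sigma_finite:
  fixes L :: "'g::{topological_group_add, t2_space, second_countable_topology} measure"
  assumes lc: "locally_compact_space (euclidean :: 'g topology)" and H: "left_haar_measure L"
  shows "sigma_finite_measure L"
proof -
  obtain K :: "nat \<Rightarrow> 'g set" where K: "\<And>n. compact (K n)" "(\<Union>n. K n) = UNIV"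
    using sigma_compact[OF lc] by blast
  have sb: "sets L = sets borel" by (rule haar_sets[OF H])
  have sp: "space L = UNIV" using sets_eq_imp_space_eq[OF sb] by simp
  show ?thesis unfolding sigma_finite_measure_def
  proof (intro exI[of _ "range K"] conjI)
    show "countable (range K)" by simp
    show "range K \<subseteq> sets L" using K(1) by (auto simp: sb borel_compact)
    show "\<Union>(range K) = space L" using K(2) sp by simp
    show "\<forall>a\<in>range K. emeasure L a \<noteq> \<infinity>"
    proof
      fix a assume "a \<in> range K"
      then obtain n where "a = K n" by blast
      thus "emeasure L a \<noteq> \<infinity>" using haar_fin[OF H K(1)[of n]] by simp
    qed
  qed
qed

lemma locally_closed_subgroup_closed:
  fixes H :: "'g::topological_group_add set"
  assumes lc: "locally_closed H" and z: "0 \<in> H"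
    and add: "\<And>a b. a \<in> H \<Longrightarrow> b \<in> H \<Longrightarrow> a + b \<in> H"
    and neg: "\<And>a. a \<in> H \<Longrightarrow> - a \<in> H"
  shows "closed H"
proof -
  obtain U C where UC: "open U" "closed C" "H = U \<inter> C" using lc unfolding locally_closed_def by blast
  have "closure H \<subseteq> H"
  proof
    fix x assume x: "x \<in> closure H"
    have o: "open {y. - y + x \<in> U}"
    proof -
      have "continuous_on UNIV (\<lambda>y. - y + x)" by (intro continuous_intros)
      from open_vimage[OF UC(1) this] show ?thesis by (simp add: vimage_def)
    qed
    have "x \<in> {y. - y + x \<in> U}" using z UC(3) by auto
    then obtain h where h: "h \<in> H" "- h + x \<in> U"
      using x o unfolding closure_iff_nhds_not_empty by blast
    have sub: "(\<lambda>t. - h + t) ` H \<subseteq> C" using h(1) add neg UC(3) by auto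
    have cont: "continuous_on (closure H) (\<lambda>t. - h + t)" by (intro continuous_intros)
    have "(\<lambda>t. - h + t) ` closure H \<subseteq> C"
      by (rule image_closure_subset[OF cont UC(2) sub])
    hence "- h + x \<in> C" using x by auto
    hence "- h + x \<in> H" using h UC(3) by auto
    from add[OF h(1) this] show "x \<in> H" by (simp add: add.assoc[symmetric])
  qed
  thus ?thesis using closure_subset_eq by blast
qed

lemma many_translates:
  fixes H C :: "'g::{topological_group_add, t2_space} set"
  assumes C: "compact C" and nc: "\<And>T. compact T \<Longrightarrow> \<not> H \<subseteq> T"
  shows "\<exists>F. F \<subseteq> H \<and> finite F \<and> card F = n \<and> disjoint_family_on (\<lambda>f. (\<lambda>c. c + f) ` C) F"
proof (induction n)
  case 0 thus ?case by (intro exI[of _ "{}"]) (auto simp: disjoint_family_on_def)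
next
  case (Suc n)
  then obtain F where F: "F \<subseteq> H" "finite F" "card F = n" "disjoint_family_on (\<lambda>f. (\<lambda>c. c + f) ` C) F"
    by blast
  define T where "T = (\<Union>f\<in>F. (\<lambda>p. - snd p + fst p + f) ` (C \<times> C))"
  have "compact T" unfolding T_def
    by (intro compact_UN F(2) compact_continuous_image compact_Times C continuous_intros)
  then obtain h where h: "h \<in> H" "h \<notin> T" using nc by blast
  show ?case
  proof (cases "C = {}")
    case True
    obtain h' where h': "h' \<in> H" "h' \<notin> F" using nc[of F] F(2) finite_imp_compact by blast
    show ?thesis
    proof (intro exI[of _ "insert h' F"] conjI)
      show "insert h' F \<subseteq> H" using F h' by auto
      show "finite (insert h' F)" using F by auto
      show "card (insert h' F) = Suc n" using F h' by simp
      show "disjoint_family_on (\<lambda>f. (\<lambda>c. c + f) ` C) (insert h' F)"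
        using True unfolding disjoint_family_on_def by simp
    qed
  next
    case False
    then obtain c0 where c0: "c0 \<in> C" by blast
    have hF: "h \<notin> F"
    proof
      assume "h \<in> F"
      moreover have "- c0 + c0 + h \<in> (\<lambda>p. - snd p + fst p + h) ` (C \<times> C)"
        by (rule rev_image_eqI[of "(c0, c0)"]) (use c0 in simp_all)
      ultimately have "- c0 + c0 + h \<in> T" unfolding T_def by blast
      thus False using h(2) by simp
    qed
    have dj: "(\<lambda>c. c + h) ` C \<inter> (\<lambda>c. c + f) ` C = {}" if f: "f \<in> F" for f
    proof (rule ccontr)
      assume "(\<lambda>c. c + h) ` C \<inter> (\<lambda>c. c + f) ` C \<noteq> {}"
      then obtain c c' where cc: "c \<in> C" "c' \<in> C" "c + h = c' + f" by auto
      have "h = - c + (c + h)" by (simp add: add.assoc[symmetric])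
      also have "\<dots> = - c + c' + f" using cc(3) by (simp add: add.assoc)
      finally have "h = - c + c' + f" .
      moreover have "- c + c' + f \<in> (\<lambda>p. - snd p + fst p + f) ` (C \<times> C)"
        by (rule rev_image_eqI[of "(c', c)"]) (use cc in simp_all)
      hence "- c + c' + f \<in> T" unfolding T_def using f by blast
      ultimately show False using h(2) by simp
    qed
    show ?thesis
    proof (intro exI[of _ "insert h F"] conjI)
      show "insert h F \<subseteq> H" using F h by auto
      show "finite (insert h F)" using F by auto
      show "card (insert h F) = Suc n" using F hF by simp
      show "disjoint_family_on (\<lambda>f. (\<lambda>c. c + f) ` C) (insert h F)"
        unfolding disjoint_family_on_insert[OF hF] using F(4) dj by blast
    qed
  qed
qed

lemma arch_ennreal:
  fixes a d :: ennreal
  assumes "0 < d" "a < \<infinity>" "\<And>m::nat. of_nat m * d \<le> a"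
  shows False
proof -
  have "d \<le> a" using assms(3)[of 1] by simp
  hence dt: "d < \<infinity>" using assms(2) by auto
  obtain d' where d': "d = ennreal d'" "0 \<le> d'" using dt by (cases d) auto
  obtain a' where a': "a = ennreal a'" "0 \<le> a'" using assms(2) by (cases a) auto
  have "0 < d'" using assms(1) d' by (simp add: ennreal_less_iff)
  then obtain m :: nat where m: "a' < real m * d'" using reals_Archimedean3 by blast
  have "of_nat m * d = ennreal (real m * d')" using d' by (simp add: ennreal_mult' ennreal_of_nat_eq_real_of_nat)
  hence "ennreal (real m * d') \<le> ennreal a'" using assms(3)[of m] a' by simp
  hence "real m * d' \<le> a'" using a' by (simp add: ennreal_le_iff)
  thus False using m by simp
qed

theorem corollary2p5:
  fixes L :: "('g::{topological_group_add, t2_space, second_countable_topology}) measure"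
    and M :: "'s measure"
    and act :: "'g \<Rightarrow> 's \<Rightarrow> 's"
  assumes "locally_compact_space (euclidean :: 'g topology)"
    and "left_haar_measure L"
    and "borel_space M"
    and "measurable_action act M"
    and "proper_action L act M"
    and "\<forall>s \<in> space M. locally_closed (stabilizer act s)"
  shows "\<forall>s \<in> space M. compact (stabilizer act s)"
proof (intro ballI)
  note lc = assms(1) and HL = assms(2)
  fix s assume s: "s \<in> space M"
  define H where "H = stabilizer act s"
  have ma: "measurable_action act M" by (rule assms(4))
  have am: "(\<lambda>(g, s). act g s) \<in> (borel \<Otimes>\<^sub>M M) \<rightarrow>\<^sub>M M"
    using ma unfolding measurable_action_def by (rule conjunct1)
  have a0: "\<forall>s \<in> space M. act 0 s = s"
    using ma unfolding measurable_action_def by (rule conjunct1[OF conjunct2])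
  have aa: "\<forall>g h. \<forall>s \<in> space M. act (g + h) s = act g (act h s)"
    using ma unfolding measurable_action_def by (rule conjunct2[OF conjunct2])
  have aas: "act (g + h) s = act g (act h s)" for g h using aa s by blast
  have Hz: "0 \<in> H" using a0 s by (simp add: H_def stabilizer_def)
  have Hadd: "a + b \<in> H" if "a \<in> H" "b \<in> H" for a b
    using that aas[of a b] by (simp add: H_def stabilizer_def)
  have Hneg: "- a \<in> H" if "a \<in> H" for a
  proof -
    have "s = act (- a + a) s" using a0 s by simp
    also have "\<dots> = act (- a) s" using aas[of "- a" a] that by (simp add: H_def stabilizer_def)
    finally show ?thesis by (simp add: H_def stabilizer_def)
  qed
  have Hcl: "closed H"
    by (rule locally_closed_subgroup_closed[OF _ Hz Hadd Hneg]) (use assms(6) s in \<open>simp add: H_def\<close>)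
  show "compact (stabilizer act s)" unfolding H_def[symmetric]
  proof (rule ccontr)
    assume nc: "\<not> compact H"
    have ncT: "\<not> H \<subseteq> T" if "compact T" for T
    proof
      assume "H \<subseteq> T"
      hence "H = T \<inter> H" by blast
      with compact_Int_closed[OF that Hcl] nc show False by simp
    qed
    have sL: "sets L = sets borel" by (rule haar_sets[OF HL])
    have spL: "space L = UNIV" using sets_eq_imp_space_eq[OF sL] by simp
    have fL: "sigma_finite_measure L" by (rule haar_sigma_finite[OF lc HL])
    have iL: "\<forall>g A. A \<in> sets borel \<longrightarrow> emeasure L ((\<lambda>x. g + x) ` A) = emeasure L A"
      by (rule haar_inv[OF HL])
    have pr: "(\<lambda>g. (g, s)) \<in> borel \<rightarrow>\<^sub>M borel \<Otimes>\<^sub>M M"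
      using s by measurable
    have fs: "(\<lambda>g. act g s) \<in> borel \<rightarrow>\<^sub>M M"
      using measurable_comp[OF pr am] by (simp add: comp_def)
    have fsL: "(\<lambda>g. act g s) \<in> L \<rightarrow>\<^sub>M M"
      by (subst measurable_cong_sets[OF sL refl]) (rule fs)
    obtain B :: "nat \<Rightarrow> 's set" where B: "\<And>n. B n \<in> sets M" "(\<Union>n. B n) = space M"
      "\<And>n. emeasure (distr L M (\<lambda>g. act g s)) (B n) < \<infinity>"
      using assms(5) s unfolding proper_action_def by blast
    define A where "A n = (\<lambda>g. act g s) -` B n" for n
    have Ab: "A n \<in> sets borel" for n
      using measurable_sets[OF fs B(1)[of n]] by (simp add: A_def)
    have Afin: "emeasure L (A n) < \<infinity>" for n
    proof -
      have "emeasure (distr L M (\<lambda>g. act g s)) (B n) = emeasure L ((\<lambda>g. act g s) -` B n \<inter> space L)"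
        by (rule emeasure_distr[OF fsL B(1)])
      thus ?thesis using B(3)[of n] by (simp add: A_def spL)
    qed
    have Acov: "(\<Union>n. A n) = UNIV"
    proof (rule sym, rule UNIV_eq_I)
      fix g
      have "act g s \<in> space M" using measurable_space[OF fs] by simp
      then obtain n where "act g s \<in> B n" using B(2) by blast
      thus "g \<in> (\<Union>n. A n)" by (auto simp: A_def)
    qed
    obtain n where Apos: "0 < emeasure L (A n)"
    proof (rule ccontr)
      assume "\<not> thesis"
      have z: "emeasure L (A n) = 0" for n using that[of n] \<open>\<not> thesis\<close> by (metis not_gr_zero)
      have "emeasure L (\<Union>n. A n) = 0" by (rule emeasure_UN_eq_0) (use z Ab sL in auto)
      moreover have "0 < emeasure L (UNIV :: 'g set)" by (rule haar_pos[OF HL]) auto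
      ultimately show False using Acov by simp
    qed
    have Ainv: "(\<lambda>a. a + h) ` A n = A n" if h: "h \<in> H" for h
    proof (intro set_eqI iffI)
      fix x assume "x \<in> (\<lambda>a. a + h) ` A n"
      then obtain a where a: "a \<in> A n" "x = a + h" by blast
      have "act h s = s" using h by (simp add: H_def stabilizer_def)
      thus "x \<in> A n" using a aas[of a h] by (simp add: A_def)
    next
      fix x assume x: "x \<in> A n"
      have "act (- h) s = s" using Hneg[OF h] by (simp add: H_def stabilizer_def)
      hence "x + - h \<in> A n" using x aas[of x "- h"] by (simp add: A_def)
      moreover have "x = (x + - h) + h" by (simp add: add.assoc)
      ultimately show "x \<in> (\<lambda>a. a + h) ` A n" by (rule rev_image_eqI)
    qed
    obtain K :: "nat \<Rightarrow> 'g set" where K: "\<And>k. compact (K k)" "(\<Union>k. K k) = UNIV"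
      using sigma_compact[OF lc] by blast
    obtain k where Dpos: "0 < emeasure L (A n \<inter> K k)"
    proof (rule ccontr)
      assume "\<not> thesis"
      have z: "emeasure L (A n \<inter> K k) = 0" for k using that[of k] \<open>\<not> thesis\<close> by (metis not_gr_zero)
      have "emeasure L (\<Union>k. A n \<inter> K k) = 0"
      proof (rule emeasure_UN_eq_0)
        show "emeasure L (A n \<inter> K i) = 0" for i by (rule z)
        have "A n \<inter> K i \<in> sets borel" for i using Ab[of n] borel_compact[OF K(1)[of i]] by (rule sets.Int)
        thus "range (\<lambda>i. A n \<inter> K i) \<subseteq> sets L" using sL by auto
      qed
      moreover have "(\<Union>k. A n \<inter> K k) = A n" using K(2) by blast
      ultimately show False using Apos by simp
    qed
    define D where "D = A n \<inter> K k"
    have Db: "D \<in> sets borel" unfolding D_def using Ab[of n] borel_compact[OF K(1)[of k]] by (rule sets.Int)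
    have DA: "D \<subseteq> A n" unfolding D_def by blast
    obtain U Kc where UK: "open U" "compact Kc" "(0::'g) \<in> U" "U \<subseteq> Kc"
      using lc_nbhd[OF lc] by blast
    have Ub: "U \<in> sets borel" using UK(1) by simp
    have rt: "emeasure L ((\<lambda>d. d + h) ` D) = emeasure L D" if h: "h \<in> H" for h
    proof (rule right_translate[OF sL fL iL Ub _ _ Ab[of n] Apos Afin[of n] _ Db])
      show "0 < emeasure L {y. y + x \<in> U}" for x by (rule translate_open_fin(1)[OF HL UK])
      show "emeasure L {y. y + x \<in> U} < \<infinity>" for x by (rule translate_open_fin(2)[OF HL UK])
      show "emeasure L ((\<lambda>a. a + h) ` A n) = emeasure L (A n)" using Ainv[OF h] by simp
    qed
    have bound: "of_nat m * emeasure L D \<le> emeasure L (A n)" for m :: nat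
    proof -
      obtain F where F: "F \<subseteq> H" "finite F" "card F = m"
        "disjoint_family_on (\<lambda>f. (\<lambda>c. c + f) ` K k) F"
        using many_translates[OF K(1)[of k] ncT] by blast
      have dj: "disjoint_family_on (\<lambda>f. (\<lambda>d. d + f) ` D) F"
        using F(4) unfolding disjoint_family_on_def D_def by blast
      have tb: "(\<lambda>d. d + f) ` D \<in> sets L" for f
        unfolding img_translate sL by (rule translate_sets[OF Db])
      have "(\<Sum>f\<in>F. emeasure L ((\<lambda>d. d + f) ` D)) = emeasure L (\<Union>f\<in>F. (\<lambda>d. d + f) ` D)"
        by (rule sum_emeasure) (use tb dj F(2) in auto)
      also have "\<dots> \<le> emeasure L (A n)"
      proof (rule emeasure_mono)
        show "(\<Union>f\<in>F. (\<lambda>d. d + f) ` D) \<subseteq> A n"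
        proof
          fix x assume "x \<in> (\<Union>f\<in>F. (\<lambda>d. d + f) ` D)"
          then obtain f where f: "f \<in> F" "x \<in> (\<lambda>d. d + f) ` D" by blast
          hence "x \<in> (\<lambda>a. a + f) ` A n" using DA by blast
          thus "x \<in> A n" using Ainv[of f] f(1) F(1) by blast
        qed
        show "A n \<in> sets L" using Ab sL by simp
      qed
      finally have "(\<Sum>f\<in>F. emeasure L ((\<lambda>d. d + f) ` D)) \<le> emeasure L (A n)" .
      moreover have "(\<Sum>f\<in>F. emeasure L ((\<lambda>d. d + f) ` D)) = of_nat m * emeasure L D"
        using rt F(1,3) by (simp add: subset_eq)
      ultimately show ?thesis by simp
    qed
    show False
      by (rule arch_ennreal[OF _ Afin[of n] bound]) (use Dpos in \<open>simp add: D_def\<close>)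
  qed
qed

end
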